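(* Let $\sigma\in(0,0.25]$, $\pi_0\in(0,1)$, $w>0$, and let $\psi(\pi)=w$ if $\pi\ge\pi_0$ and $\psi(\pi)=0$ otherwise (i.e. the threshold equals the prior). Define $\pi_1(1)=\frac{(1+4\sigma)\pi_0}{1+4\sigma\pi_0}$, $\pi_1(0)=\frac{(1-4\sigma)\pi_0}{1-4\sigma\pi_0}$, $\Phi(C,\sigma,\pi_0)=0.5+2\sigma\pi_0+(0.5+2\sigma\pi_0)\psi(\pi_1(1))+(0.5-2\sigma\pi_0)\psi(\pi_1(0))$ and $\Phi(S,\sigma,\pi_0)=0.5+\psi(\pi_0)$; the expert chooses the complex rule iff $\Phi(C,\sigma,\pi_0)\ge\Phi(S,\sigma,\pi_0)$. Then the expert chooses the complex rule if and only if $$w\le\frac{4\sigma\pi_0}{1-4\sigma\pi_0}.$$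
   Context: Interpretation: the expert earns wage $w$ iff the posterior belief that he is competent is at least the prior $\pi_0$; the complex rule yields the correct action with probability $0.5+2\sigma$ if he is competent and $0.5$ otherwise, and the simple rule yields it with probability $0.5$ and reveals nothing. *)

theory Defs
  imports Complex_Main
begin

definition psi :: "real \<Rightarrow> real \<Rightarrow> real \<Rightarrow> real" where
  "psi w pi0 p = (if p \<ge> pi0 then w else 0)"

text \<open>Posterior after a correct outcome (signal 1) and an incorrect one (signal 0).\<close>
definition pi1_one :: "real \<Rightarrow> real \<Rightarrow> real" where
  "pi1_one \<sigma> pi0 = ((1 + 4*\<sigma>) * pi0) / (1 + 4*\<sigma>*pi0)"

definition pi1_zero :: "real \<Rightarrow> real \<Rightarrow> real" where
  "pi1_zero \<sigma> pi0 = ((1 - 4*\<sigma>) * pi0) / (1 - 4*\<sigma>*pi0)"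

definition Phi_C :: "real \<Rightarrow> real \<Rightarrow> real \<Rightarrow> real" where
  "Phi_C w \<sigma> pi0 = 0.5 + 2*\<sigma>*pi0 + (0.5 + 2*\<sigma>*pi0) * psi w pi0 (pi1_one \<sigma> pi0)
                    + (0.5 - 2*\<sigma>*pi0) * psi w pi0 (pi1_zero \<sigma> pi0)"

definition Phi_S :: "real \<Rightarrow> real \<Rightarrow> real" where
  "Phi_S w pi0 = 0.5 + psi w pi0 pi0"

definition chooses_complex :: "real \<Rightarrow> real \<Rightarrow> real \<Rightarrow> bool" where
  "chooses_complex w \<sigma> pi0 \<longleftrightarrow> Phi_C w \<sigma> pi0 \<ge> Phi_S w pi0"

end

theory Submission
  imports Defs
begin

theorem corollary3:
  fixes \<sigma> pi0 w :: real
  assumes "0 < \<sigma>" and "\<sigma> \<le> 0.25"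
    and "0 < pi0" and "pi0 < 1"
    and "0 < w"
  shows "chooses_complex w \<sigma> pi0 \<longleftrightarrow> w \<le> (4*\<sigma>*pi0) / (1 - 4*\<sigma>*pi0)"
proof -
  have sp: "4*\<sigma>*pi0 < 1" "0 < 4*\<sigma>*pi0"
    using assms by (auto intro: mult_pos_pos) (smt (verit) mult_less_cancel_left2 mult_pos_pos)
  have d1: "1 + 4*\<sigma>*pi0 > 0" using sp by linarith
  have "4*\<sigma>*pi0 \<le> 4*\<sigma>" using assms by (simp add: mult_left_le)
  hence a: "pi1_one \<sigma> pi0 \<ge> pi0"
    unfolding pi1_one_def using d1 assms by (simp add: le_divide_eq algebra_simps)
  have "4*\<sigma>*pi0 < 4*\<sigma>" using assms by simp
  hence "pi0 * (1 - 4*\<sigma>*pi0) > (1 - 4*\<sigma>) * pi0" using assms by (simp add: algebra_simps)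
  hence "(1 - 4*\<sigma>) * pi0 / (1 - 4*\<sigma>*pi0) < pi0" using sp by (simp add: divide_less_eq)
  hence b: "\<not> pi1_zero \<sigma> pi0 \<ge> pi0"
    unfolding pi1_zero_def by linarith
  have "chooses_complex w \<sigma> pi0 \<longleftrightarrow> 0.5 + 2*\<sigma>*pi0 + (0.5 + 2*\<sigma>*pi0) * w \<ge> 0.5 + w"
    unfolding chooses_complex_def Phi_C_def Phi_S_def psi_def using a b by simp
  also have "\<dots> \<longleftrightarrow> w * (1 - 4*\<sigma>*pi0) \<le> 4*\<sigma>*pi0" by (auto simp: algebra_simps)
  also have "\<dots> \<longleftrightarrow> w \<le> (4*\<sigma>*pi0) / (1 - 4*\<sigma>*pi0)" using sp by (simp add: le_divide_eq)
  finally show ?thesis .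
qed

end
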